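(* Let $\{x^k\}$ be generated by the ABP algorithm described in the context and assume (A1)–(A6), (A7'), (A8): (A1) $\mathcal F$ is continuously differentiable; (A2) $C$, $Q$ nonempty closed convex, $z_i^*>-\infty$ for each $i$; (A3) each $f_i$ convex; (A4) $\Omega\ne\emptyset$; (A5) $\lambda_k>0$, $\sum\lambda_k=\infty$, $\sum\lambda_k^2<\infty$; (A6) $0<\underline\alpha\le\alpha_k\le\bar\alpha$, $0<\underline\beta\le\beta_k\le\bar\beta$, $0<\underline\gamma\le\gamma_k\le\bar\gamma$ for all $k$; (A7') $\sigma:=\varphi^*-\varphi_{\mathrm{lb}}\le\varepsilon_0$ for a known constant $\varepsilon_0\ge0$; (A8) $\sup_k\|x^k\|\le B<\infty$. Let $\bar M<\infty$ be a uniform bound $\|d^k\|\le\bar M$ for all $k$ (which exists under these assumptions), $\bar\eta:=\max(\mu,\bar M)$, $C_*:=\bar\alpha\bar\eta/\mu$ and $\Lambda_N:=\sum_{k=0}^N\lambda_k$. Then $$\limsup_{N\to\infty}\frac1{\Lambda_N}\sum_{k=0}^N\lambda_k\Phi_k\le C_*\varepsilon_0,\qquad\text{and in particular}\qquad\liminf_{k\to\infty}\Phi_k\le C_*\varepsilon_0.$$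
   Context: Let $n,m\ge1$, $\mathcal F=(f_1,\dots,f_m)\colon\mathbb R^n\to\mathbb R^m$, $C\subset\mathbb R^n$, $Q\subset\mathbb R^m$, $Q^+:=Q-\mathbb R^m_+=\{y-u:y\in Q,u\in\mathbb R^m_+\}$; $P_S$ is Euclidean projection onto a nonempty closed convex set $S$. Let $z_i^*:=\inf_{x\in C}f_i(x)$, fix $r$ with $r_i>0$, $\sum r_i=1$. Define $\varphi(x):=\max_ir_i(f_i(x)-z_i^* )$, $H(x):=\tfrac12\mathrm{dist}^2(x,C)$, $G(x):=\tfrac12\mathrm{dist}^2(\mathcal F(x),Q^+)$, $\mathcal S:=\{x:H(x)=0,G(x)=0\}$, $\varphi^*:=\inf_{\mathcal S}\varphi$, $\Omega:=\{x\in\mathcal S:\varphi(x)=\varphi^*\}$, $\varphi_{\mathrm{lb}}:=\inf_C\varphi$. ABP algorithm: given $x^0$, $\mu>0$, positive sequences $\{\alpha_k\},\{\beta_k\},\{\gamma_k\},\{\lambda_k\}$: $p^k:=P_{Q^+}(\mathcal F(x^k))$, $\rho^k:=\mathcal F(x^k)-p^k$, $z^k:=x^k-P_C(x^k)$, $v^k:=J_{\mathcal F}(x^k)^T\rho^k$, $w^k:=r_{i^*}\nabla f_{i^*}(x^k)$ with arbitrary $i^*\in\arg\max_ir_i(f_i(x^k)-z_i^* )$, $\Delta_k:=\varphi(x^k)-\varphi_{\mathrm{lb}}$, $d^k:=\alpha_k\mathbf 1_{\{\Delta_k\ge0\}}w^k+\beta_kz^k+\gamma_kv^k$, $\eta_k:=\max(\mu,\|d^k\|)$,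 $x^{k+1}:=x^k-(\lambda_k/\eta_k)d^k$. Notation: $H_k:=H(x^k)$, $G_k:=G(x^k)$, $\Delta_k^+:=\max(\Delta_k,0)$, $\Phi_k:=\alpha_k\Delta_k^++\beta_kH_k+\gamma_kG_k$.
   Formalization: In the ABP algorithm, $p^k$ is the projection of $\mathcal F(x^k)$ onto the closure of $Q^+$ rather than onto $Q^+$. The statement above fails without it. *)

theory Defs
  imports "HOL-Analysis.Analysis"
begin

definition Qplus :: "(real^'m) set \<Rightarrow> (real^'m) set" where
  "Qplus Q = {y - u | y u. y \<in> Q \<and> (\<forall>i. 0 \<le> u $ i)}"

definition zstar :: "(real^'n \<Rightarrow> real^'m) \<Rightarrow> (real^'n) set \<Rightarrow> 'm \<Rightarrow> real" where
  "zstar F C i = (INF y\<in>C. F y $ i)"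

definition phi :: "(real^'n \<Rightarrow> real^'m::finite) \<Rightarrow> (real^'n) set \<Rightarrow> real^'m \<Rightarrow> real^'n \<Rightarrow> real" where
  "phi F C r y = Max (range (\<lambda>i. r $ i * (F y $ i - zstar F C i)))"

definition Hfun :: "(real^'n) set \<Rightarrow> real^'n \<Rightarrow> real" where
  "Hfun C y = (infdist y C)\<^sup>2 / 2"

definition Gfun :: "(real^'n \<Rightarrow> real^'m) \<Rightarrow> (real^'m) set \<Rightarrow> real^'n \<Rightarrow> real" where
  "Gfun F Q y = (infdist (F y) (Qplus Q))\<^sup>2 / 2"

definition feasible :: "(real^'n \<Rightarrow> real^'m) \<Rightarrow> (real^'n) set \<Rightarrow> (real^'m) set \<Rightarrow> (real^'n) set" where
  "feasible F C Q = {y. Hfun C y = 0 \<and> Gfun F Q y = 0}"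

definition phistar :: "(real^'n \<Rightarrow> real^'m::finite) \<Rightarrow> (real^'n) set \<Rightarrow> (real^'m) set \<Rightarrow> real^'m \<Rightarrow> real" where
  "phistar F C Q r = (INF y\<in>feasible F C Q. phi F C r y)"

definition Omega :: "(real^'n \<Rightarrow> real^'m::finite) \<Rightarrow> (real^'n) set \<Rightarrow> (real^'m) set \<Rightarrow> real^'m \<Rightarrow> (real^'n) set" where
  "Omega F C Q r = {y \<in> feasible F C Q. phi F C r y = phistar F C Q r}"

definition philb :: "(real^'n \<Rightarrow> real^'m::finite) \<Rightarrow> (real^'n) set \<Rightarrow> real^'m \<Rightarrow> real" where
  "philb F C r = (INF y\<in>C. phi F C r y)"

text \<open>The ABP direction d^k at iterate y, with weights a = alpha_k, b = beta_k, g = gamma_k and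
  chosen maximizing index i = i^*. J y is the Jacobian matrix of F at y (rows = gradients of f_i).\<close>
definition abp_d :: "(real^'n \<Rightarrow> real^'m::finite) \<Rightarrow> (real^'n \<Rightarrow> real^'n^'m) \<Rightarrow> (real^'n) set \<Rightarrow>
    (real^'m) set \<Rightarrow> real^'m \<Rightarrow> real \<Rightarrow> real \<Rightarrow> real \<Rightarrow> 'm \<Rightarrow> real^'n \<Rightarrow> real^'n" where
  "abp_d F J C Q r a b g i y =
     (let p = closest_point (closure (Qplus Q)) (F y);
          rho = F y - p;
          z = y - closest_point C y;
          v = transpose (J y) *v rho;
          w = r $ i *\<^sub>R (J y $ i);
          D = phi F C r y - philb F C r
      in (if D \<ge> 0 then a else 0) *\<^sub>R w + b *\<^sub>R z + g *\<^sub>R v)"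

definition Phi_val :: "(real^'n \<Rightarrow> real^'m::finite) \<Rightarrow> (real^'n) set \<Rightarrow> (real^'m) set \<Rightarrow> real^'m \<Rightarrow>
    real \<Rightarrow> real \<Rightarrow> real \<Rightarrow> real^'n \<Rightarrow> real" where
  "Phi_val F C Q r a b g y =
     a * max (phi F C r y - philb F C r) 0 + b * Hfun C y + g * Gfun F Q y"

end

theory Submission imports Defs begin

lemma grad_ineq:
  fixes f :: "'a::real_normed_vector \<Rightarrow> real"
  assumes cv: "convex_on UNIV f" and d: "(f has_derivative f') (at y)"
  shows "f' (z - y) \<le> f z - f y"
proof -
  define v where "v = z - y"
  define g where "g t = f (y + t *\<^sub>R v)" for t :: real
  have gc: "convex_on UNIV g"
  proof (rule convex_onI)
    fix t a b :: real assume "0 < t" "t < 1"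
    have "y + ((1 - t) * a + t * b) *\<^sub>R v = (1 - t) *\<^sub>R (y + a *\<^sub>R v) + t *\<^sub>R (y + b *\<^sub>R v)"
      by (simp add: algebra_simps)
    then show "g ((1 - t) *\<^sub>R a + t *\<^sub>R b) \<le> (1 - t) * g a + t * g b"
      unfolding g_def using convex_onD[OF cv, of t "y + a *\<^sub>R v" "y + b *\<^sub>R v"] \<open>0<t\<close> \<open>t<1\<close> by simp
  qed simp
  have lin: "bounded_linear f'" using d by (rule has_derivative_bounded_linear)
  have d1: "((\<lambda>t::real. y + t *\<^sub>R v) has_derivative (\<lambda>h. h *\<^sub>R v)) (at 0)"
    by (auto intro!: derivative_eq_intros)
  have "(f has_derivative f') (at (y + 0 *\<^sub>R v))" using d by simp
  from has_derivative_compose[OF d1 this]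
  have "(g has_derivative (\<lambda>h. f' (h *\<^sub>R v))) (at 0)" unfolding g_def o_def by simp
  moreover have "(\<lambda>h. f' (h *\<^sub>R v)) = (*) (f' v)"
    using lin by (simp add: linear_simps fun_eq_iff mult.commute)
  ultimately have "(g has_field_derivative f' v) (at 0)"
    by (simp add: has_field_derivative_def)
  then have "(g has_field_derivative f' v) (at 0 within UNIV)" by simp
  from convex_on_imp_above_tangent[OF gc _ _ _ this, of 1]
  have "g 1 - g 0 \<ge> f' v * (1 - 0)" by simp
  then show ?thesis unfolding g_def v_def by simp
qed

lemma convex_Qplus: "convex Q \<Longrightarrow> convex (Qplus Q)"
  unfolding convex_def Qplus_def
proof (clarsimp)
  fix y1 u1 y2 u2 :: "real^'a" and a b :: real
  assume cQ: "\<forall>x\<in>Q. \<forall>y\<in>Q. \<forall>u\<ge>0. \<forall>v\<ge>0. u + v = 1 \<longrightarrow> u *\<^sub>R x + v *\<^sub>R y \<in> Q"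
    and h: "y1 \<in> Q" "\<forall>i. 0 \<le> u1 $ i" "y2 \<in> Q" "\<forall>i. 0 \<le> u2 $ i" "0 \<le> a" "0 \<le> b" "a + b = 1"
  show "\<exists>y u. a *\<^sub>R (y1 - u1) + b *\<^sub>R (y2 - u2) = y - u \<and> y \<in> Q \<and> (\<forall>i. 0 \<le> u $ i)"
    apply (rule exI[of _ "a *\<^sub>R y1 + b *\<^sub>R y2"], rule exI[of _ "a *\<^sub>R u1 + b *\<^sub>R u2"])
    using h cQ by (auto simp: algebra_simps)
qed

lemma Qplus_ne: "Q \<noteq> {} \<Longrightarrow> Qplus Q \<noteq> {}"
proof -
  assume "Q \<noteq> {}" then obtain q where "q \<in> Q" by auto
  then have "q - 0 \<in> Qplus Q" unfolding Qplus_def by (intro CollectI exI[of _ q] exI[of _ "0::real^'a"]) auto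
  then show ?thesis by auto
qed

lemma Qplus_shift: "z \<in> Qplus Q \<Longrightarrow> \<forall>i. 0 \<le> e $ i \<Longrightarrow> z - e \<in> Qplus Q"
  unfolding Qplus_def
proof clarsimp
  fix y u :: "real^'a" assume "y \<in> Q" "\<forall>i. 0 \<le> u $ i" "\<forall>i. 0 \<le> e $ i"
  then show "\<exists>ya ua. y - u - e = ya - ua \<and> ya \<in> Q \<and> (\<forall>i. 0 \<le> ua $ i)"
    by (intro exI[of _ y] exI[of _ "u + e"]) auto
qed

lemma closure_Qplus_shift:
  assumes "z \<in> closure (Qplus Q)" "\<forall>i. 0 \<le> e $ i"
  shows "z - e \<in> closure (Qplus Q)"
proof -
  have "(\<lambda>z. z - e) ` closure (Qplus Q) \<subseteq> closure (Qplus Q)"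
    apply (rule image_closure_subset)
    using Qplus_shift[OF _ assms(2)] closure_subset by (auto intro!: continuous_intros)
  then show ?thesis using assms(1) by auto
qed

lemma mv_nth: "((A::real^'n^'m) *v h) $ i = inner (A $ i) h"
  by (simp add: matrix_vector_mult_def inner_vec_def mult.commute)

lemma key:
  fixes F :: "real^'n \<Rightarrow> real^'m::finite"
    and J :: "real^'n \<Rightarrow> real^'n^'m"
  assumes A1: "\<forall>y. (F has_derivative (\<lambda>h. J y *v h)) (at y)"
    and A2: "closed C" "convex C" "C \<noteq> {}" "closed Q" "convex Q" "Q \<noteq> {}"
    and A3: "\<forall>i. convex_on UNIV (\<lambda>y. F y $ i)"
    and xs: "xs \<in> Omega F C Q r"
    and r_pos: "\<forall>i. r $ i > 0"
    and ist: "\<forall>j. r $ j * (F y $ j - zstar F C j) \<le> r $ i * (F y $ i - zstar F C i)"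
    and abg: "a \<ge> 0" "b \<ge> 0" "g \<ge> 0"
  shows "Phi_val F C Q r a b g y \<le> inner (abp_d F J C Q r a b g i y) (y - xs)
           + a * max (phistar F C Q r - philb F C r) 0"
proof -
  define P where "P = closure (Qplus Q)"
  have Pc: "closed P" "convex P" "P \<noteq> {}"
    unfolding P_def using convex_Qplus[OF A2(5)] Qplus_ne[OF A2(6)] by auto
  define p where "p = closest_point P (F y)"
  define rho where "rho = F y - p"
  define c where "c = closest_point C y"
  define z where "z = y - c"
  define v where "v = transpose (J y) *v rho"
  define w where "w = r $ i *\<^sub>R (J y $ i)"
  define D where "D = phi F C r y - philb F C r"
  define sig where "sig = phistar F C Q r - philb F C r"
  have dform: "abp_d F J C Q r a b g i y = (if D \<ge> 0 then a else 0) *\<^sub>R w + b *\<^sub>R z + g *\<^sub>R v"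
    unfolding abp_d_def Let_def p_def rho_def z_def c_def v_def w_def D_def P_def by simp
  have xsF: "xs \<in> feasible F C Q" and phixs: "phi F C r xs = phistar F C Q r"
    using xs by (auto simp: Omega_def)
  have xsC: "xs \<in> C" using xsF A2(1,3) by (simp add: feasible_def Hfun_def in_closed_iff_infdist_zero)
  have FxsP: "F xs \<in> P" using xsF Qplus_ne[OF A2(6)] by (simp add: feasible_def Gfun_def P_def in_closure_iff_infdist_zero)
  have pP: "p \<in> P" and pmin: "\<forall>q\<in>P. dist (F y) p \<le> dist (F y) q"
    using closest_point_exists[OF Pc(1,3)] unfolding p_def by auto
  have rho_nn: "0 \<le> rho $ j" for j
  proof -
    have "p - axis j 1 \<in> P" using closure_Qplus_shift[of p Q "axis j 1"] pP unfolding P_def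
      by (auto simp: axis_def)
    from any_closest_point_dot[OF Pc(2,1) pP this pmin]
    show ?thesis by (simp add: rho_def inner_axis)
  qed
  have rho_xs: "inner rho (F xs - p) \<le> 0"
    using any_closest_point_dot[OF Pc(2,1) pP FxsP pmin] by (simp add: rho_def)
  have normrho: "norm rho = infdist (F y) (Qplus Q)"
  proof -
    have "norm rho = setdist {F y} P" using setdist_closest_point[OF Pc(1,3)]
      by (simp add: rho_def p_def dist_norm)
    then show ?thesis by (simp add: P_def infdist_eq_setdist)
  qed
  have tang: "(J y *v (y - xs)) $ j \<ge> F y $ j - F xs $ j" for j
  proof -
    have "((\<lambda>y. F y $ j) has_derivative (\<lambda>h. (J y *v h) $ j)) (at y)"
      using bounded_linear.has_derivative[OF bounded_linear_vec_nth A1[rule_format, of y]] by simp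
    from grad_ineq[OF A3[rule_format, of j] this, of xs]
    show ?thesis by (simp add: matrix_vector_mult_diff_distrib)
  qed
  have vineq: "inner v (y - xs) \<ge> 2 * Gfun F Q y"
  proof -
    have "inner v (y - xs) = inner rho (J y *v (y - xs))"
      by (simp add: v_def dot_lmul_matrix)
    also have "\<dots> = (\<Sum>j\<in>UNIV. rho $ j * (J y *v (y - xs)) $ j)" by (simp add: inner_vec_def)
    also have "\<dots> \<ge> (\<Sum>j\<in>UNIV. rho $ j * (F y $ j - F xs $ j))"
      by (rule sum_mono) (intro mult_left_mono tang rho_nn)
    finally have "inner v (y - xs) \<ge> inner rho (F y - F xs)" by (simp add: inner_vec_def)
    moreover have "inner rho (F y - F xs) = inner rho rho - inner rho (F xs - p)"
      by (simp add: rho_def inner_diff_right)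
    moreover have "inner rho rho = 2 * Gfun F Q y"
      by (simp add: Gfun_def normrho[symmetric] power2_norm_eq_inner)
    ultimately show ?thesis using rho_xs by linarith
  qed
  have zineq: "inner z (y - xs) \<ge> 2 * Hfun C y"
  proof -
    have cC: "c \<in> C" and cmin: "\<forall>q\<in>C. dist y c \<le> dist y q"
      using closest_point_exists[OF A2(1,3)] unfolding c_def by auto
    have "inner z (xs - c) \<le> 0" using any_closest_point_dot[OF A2(2,1) cC xsC cmin] by (simp add: z_def)
    moreover have "inner z (y - xs) = inner z z - inner z (xs - c)"
      by (simp add: z_def inner_diff_right)
    moreover have "norm z = infdist y C"
      using setdist_closest_point[OF A2(1,3), of y] by (simp add: z_def c_def dist_norm infdist_eq_setdist)
    then have "inner z z = 2 * Hfun C y" by (simp add: Hfun_def power2_norm_eq_inner[symmetric])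
    ultimately show ?thesis by linarith
  qed
  have phiy: "phi F C r y = r $ i * (F y $ i - zstar F C i)"
    unfolding phi_def by (rule Max_eqI) (use ist in auto)
  have phixs_ge: "r $ i * (F xs $ i - zstar F C i) \<le> phi F C r xs"
    unfolding phi_def by (rule Max_ge) auto
  have wineq: "inner w (y - xs) \<ge> D - sig"
  proof -
    have "inner w (y - xs) = r $ i * (J y *v (y - xs)) $ i" by (simp add: w_def mv_nth)
    also have "\<dots> \<ge> r $ i * (F y $ i - F xs $ i)"
      using tang[of i] r_pos by (simp add: mult_left_mono)
    finally show ?thesis using phiy phixs_ge phixs
      by (simp add: D_def sig_def algebra_simps)
  qed
  have H0: "Hfun C y \<ge> 0" "Gfun F Q y \<ge> 0" by (auto simp: Hfun_def Gfun_def)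
  have aterm: "a * max D 0 \<le> (if D \<ge> 0 then a else 0) * inner w (y - xs) + a * max sig 0"
  proof (cases "D \<ge> 0")
    case True
    have "a * (D - sig) \<le> a * inner w (y - xs)" using wineq abg by (simp add: mult_left_mono)
    moreover have "a * sig \<le> a * max sig 0" using abg by (simp add: mult_left_mono)
    ultimately show ?thesis using True abg
      by (simp add: algebra_simps)
  next
    case False then show ?thesis using abg by simp
  qed
  have "Phi_val F C Q r a b g y = a * max D 0 + b * Hfun C y + g * Gfun F Q y"
    by (simp add: Phi_val_def D_def)
  also have "\<dots> \<le> (if D \<ge> 0 then a else 0) * inner w (y - xs) + a * max sig 0
                  + b * inner z (y - xs) + g * inner v (y - xs)"
    using aterm mult_left_mono[OF zineq abg(2)] mult_left_mono[OF vineq abg(3)] H0 abg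
    by (smt (verit) mult_left_mono)
  also have "\<dots> = inner (abp_d F J C Q r a b g i y) (y - xs) + a * max sig 0"
    by (simp add: dform inner_add_left)
  finally show ?thesis by (simp add: sig_def)
qed

lemma step_real:
  fixes lam mu eta Eb Ph L0 I e0 e1 :: real
  assumes "lam > 0" "mu > 0" "eta \<ge> mu" "eta \<le> Eb" "Ph \<ge> 0" "L0 \<ge> 0" "Ph \<le> I + L0"
    "e1 \<le> e0 - 2 * (lam / eta) * I + lam\<^sup>2"
  shows "lam * Ph \<le> Eb / 2 * (e0 - e1 + lam\<^sup>2) + Eb * lam * L0 / mu"
proof -
  have eta0: "eta > 0" using assms by linarith
  have t0: "lam / eta > 0" using assms eta0 by simp
  have "(lam / eta) * Ph \<le> (lam / eta) * (I + L0)"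
    using mult_left_mono[OF assms(7), of "lam/eta"] t0 by simp
  then have a: "(lam / eta) * Ph \<le> (lam / eta) * I + (lam / eta) * L0"
    by (simp only: distrib_left)
  have b: "(lam / eta) * L0 \<le> (lam / mu) * L0"
    by (rule mult_right_mono[OF divide_left_mono]) (use assms eta0 in auto)
  have c: "(lam / Eb) * Ph \<le> (lam / eta) * Ph"
    by (rule mult_right_mono[OF divide_left_mono]) (use assms eta0 in auto)
  have "2 * ((lam / Eb) * Ph) \<le> e0 - e1 + lam\<^sup>2 + 2 * ((lam / mu) * L0)"
    using a b c assms(8) by linarith
  then have "Eb / 2 * (2 * ((lam / Eb) * Ph)) \<le> Eb / 2 * (e0 - e1 + lam\<^sup>2 + 2 * ((lam / mu) * L0))"
    by (rule mult_left_mono) (use assms eta0 in auto)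
  moreover have "Eb / 2 * (2 * ((lam / Eb) * Ph)) = lam * Ph" using assms eta0 by (simp add: field_simps)
  moreover have "Eb / 2 * (e0 - e1 + lam\<^sup>2 + 2 * ((lam / mu) * L0)) = Eb / 2 * (e0 - e1 + lam\<^sup>2) + Eb * lam * L0 / mu"
    using assms by (simp add: field_simps)
  ultimately show ?thesis by simp
qed

lemma norm_expand:
  fixes a d :: "'a::real_inner"
  shows "(norm (a - t *\<^sub>R d))\<^sup>2 = (norm a)\<^sup>2 - 2 * t * inner d a + (t * norm d)\<^sup>2"
proof -
  have "(norm (a - t *\<^sub>R d))\<^sup>2 = inner (a - t *\<^sub>R d) (a - t *\<^sub>R d)" by (rule power2_norm_eq_inner)
  also have "\<dots> = inner a a - 2 * t * inner d a + t * t * inner d d"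
    by (simp add: inner_diff_left inner_diff_right inner_commute algebra_simps)
  also have "\<dots> = (norm a)\<^sup>2 - 2 * t * inner d a + (t * norm d)\<^sup>2"
    by (simp add: power2_norm_eq_inner[symmetric] power_mult_distrib power2_eq_square)
  finally show ?thesis .
qed

lemma norm_step:
  fixes a d :: "'a::real_inner"
  assumes "norm d \<le> eta" "eta > 0" "lam > 0"
  shows "(norm (a - (lam / eta) *\<^sub>R d))\<^sup>2 \<le> (norm a)\<^sup>2 - 2 * (lam / eta) * inner d a + lam\<^sup>2"
proof -
  have "(norm (a - (lam / eta) *\<^sub>R d))\<^sup>2 = (norm a)\<^sup>2 - 2 * (lam / eta) * inner d a + ((lam / eta) * norm d)\<^sup>2"
    by (rule norm_expand)
  moreover have "(lam / eta) * norm d \<le> lam"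
    using mult_left_mono[OF assms(1), of "lam/eta"] assms by simp
  then have "((lam / eta) * norm d)\<^sup>2 \<le> lam\<^sup>2"
    by (rule power_mono) (use assms in simp)
  ultimately show ?thesis by linarith
qed

lemma partial_sums_at_top:
  fixes lam :: "nat \<Rightarrow> real"
  assumes "\<forall>k. lam k > 0" "\<not> summable lam"
  shows "filterlim (\<lambda>N. \<Sum>k\<le>N. lam k) at_top sequentially"
proof (subst filterlim_at_top, intro allI)
  fix Z :: real
  have inc: "incseq (\<lambda>N. \<Sum>k\<le>N. lam k)"
    by (rule incseq_SucI) (use assms in \<open>auto intro: less_imp_le\<close>)
  show "eventually (\<lambda>N. Z \<le> (\<Sum>k\<le>N. lam k)) sequentially"
  proof (rule ccontr)
    assume "\<not> ?thesis"
    then have bnd: "\<forall>N. (\<Sum>k\<le>N. lam k) < Z"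
      using inc by (metis (no_types, lifting) eventually_sequentially incseq_def order.trans linorder_not_le)
    then have "Bseq (\<lambda>N. \<Sum>k\<le>N. lam k)"
    proof (intro BseqI'[of _ "max \<bar>Z\<bar> \<bar>lam 0\<bar>"])
      fix N
      have "lam 0 \<le> (\<Sum>k\<le>N. lam k)" using inc[unfolded incseq_def, rule_format, of 0 N] by simp
      moreover have "(\<Sum>k\<le>N. lam k) < Z" using bnd by blast
      ultimately show "norm (\<Sum>k\<le>N. lam k) \<le> max \<bar>Z\<bar> \<bar>lam 0\<bar>" by auto
    qed
    then have "convergent (\<lambda>N. \<Sum>k\<le>N. lam k)"
      using inc by (intro Bseq_mono_convergent) (auto simp: incseq_def)
    then show False using assms(2) by (simp add: summable_iff_convergent')
  qed
qed

theorem lemma17: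
  fixes F :: "real^'n \<Rightarrow> real^'m::finite"
    and J :: "real^'n \<Rightarrow> real^'n^'m"
    and C :: "(real^'n) set" and Q :: "(real^'m) set" and r :: "real^'m"
    and x :: "nat \<Rightarrow> real^'n" and istar :: "nat \<Rightarrow> 'm"
    and mu :: real and al be ga lam :: "nat \<Rightarrow> real"
    and alo ahi blo bhi glo ghi eps0 B Mbar :: real
  assumes A1: "\<forall>y. (F has_derivative (\<lambda>h. J y *v h)) (at y)" "continuous_on UNIV J"
    and A2: "closed C" "convex C" "C \<noteq> {}" "closed Q" "convex Q" "Q \<noteq> {}"
            "\<forall>i. bdd_below ((\<lambda>y. F y $ i) ` C)"
    and A3: "\<forall>i. convex_on UNIV (\<lambda>y. F y $ i)"
    and A4: "Omega F C Q r \<noteq> {}"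
    and r_pos: "\<forall>i. r $ i > 0" and r_sum: "(\<Sum>i\<in>UNIV. r $ i) = 1"
    and mu_pos: "mu > 0"
    and istar: "\<forall>k j. r $ j * (F (x k) $ j - zstar F C j)
                   \<le> r $ istar k * (F (x k) $ istar k - zstar F C (istar k))"
    and iter: "\<forall>k. x (Suc k) = x k - (lam k / max mu (norm (abp_d F J C Q r (al k) (be k) (ga k) (istar k) (x k))))
                     *\<^sub>R abp_d F J C Q r (al k) (be k) (ga k) (istar k) (x k)"
    and A5: "\<forall>k. lam k > 0" "\<not> summable lam" "summable (\<lambda>k. (lam k)\<^sup>2)"
    and A6: "0 < alo" "\<forall>k. alo \<le> al k \<and> al k \<le> ahi"
            "0 < blo" "\<forall>k. blo \<le> be k \<and> be k \<le> bhi"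
            "0 < glo" "\<forall>k. glo \<le> ga k \<and> ga k \<le> ghi"
    and A7': "eps0 \<ge> 0" "phistar F C Q r - philb F C r \<le> eps0"
    and A8: "\<forall>k. norm (x k) \<le> B"
    and Mbar: "\<forall>k. norm (abp_d F J C Q r (al k) (be k) (ga k) (istar k) (x k)) \<le> Mbar"
  shows "limsup (\<lambda>N. ereal ((\<Sum>k\<le>N. lam k * Phi_val F C Q r (al k) (be k) (ga k) (x k))
                              / (\<Sum>k\<le>N. lam k)))
           \<le> ereal (ahi * max mu Mbar / mu * eps0)
         \<and> liminf (\<lambda>k. ereal (Phi_val F C Q r (al k) (be k) (ga k) (x k)))
           \<le> ereal (ahi * max mu Mbar / mu * eps0)"
  proof -
  obtain xs where xs: "xs \<in> Omega F C Q r" using A4 by auto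
  define d where "d k = abp_d F J C Q r (al k) (be k) (ga k) (istar k) (x k)" for k
  define Ph where "Ph k = Phi_val F C Q r (al k) (be k) (ga k) (x k)" for k
  define e where "e k = (norm (x k - xs))\<^sup>2" for k
  define Eb where "Eb = max mu Mbar"
  define L0 where "L0 = ahi * eps0"
  define L where "L = ahi * max mu Mbar / mu * eps0"
  define Lam where "Lam N = (\<Sum>k\<le>N. lam k)" for N
  define S where "S = suminf (\<lambda>k. (lam k)\<^sup>2)"
  have alk: "0 \<le> al k" "al k \<le> ahi" for k using A6(1) spec[OF A6(2), of k] by auto
  have bek: "0 \<le> be k" for k using A6(3) spec[OF A6(4), of k] by auto
  have gak: "0 \<le> ga k" for k using A6(5) spec[OF A6(6), of k] by auto
  have ahi0: "0 \<le> ahi" using alk(1)[of 0] alk(2)[of 0] by linarith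
  have Eb0: "Eb > 0" using mu_pos by (simp add: Eb_def)
  have L0nn: "L0 \<ge> 0" using ahi0 A7'(1) by (simp add: L0_def)
  have Lnn: "L \<ge> 0" using ahi0 A7'(1) mu_pos by (simp add: L_def)
  have Ph0: "Ph k \<ge> 0" for k
    unfolding Ph_def Phi_val_def Hfun_def Gfun_def using alk(1)[of k] bek[of k] gak[of k]
    by (intro add_nonneg_nonneg mult_nonneg_nonneg) auto
  have keyk: "Ph k \<le> inner (d k) (x k - xs) + L0" for k
  proof -
    have "Ph k \<le> inner (d k) (x k - xs) + al k * max (phistar F C Q r - philb F C r) 0"
      unfolding Ph_def d_def
      by (rule key[OF A1(1) A2(1-6) A3 xs r_pos spec[OF istar, of k] alk(1) bek gak])
    moreover have "al k * max (phistar F C Q r - philb F C r) 0 \<le> ahi * eps0"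
      by (rule mult_mono) (use alk A7' ahi0 in auto)
    ultimately show ?thesis by (simp add: L0_def)
  qed
  have etapos: "max mu (norm (d k)) > 0" for k using mu_pos by simp
  have stepk: "e (Suc k) \<le> e k - 2 * (lam k / max mu (norm (d k))) * inner (d k) (x k - xs) + (lam k)\<^sup>2" for k
  proof -
    have eq: "x (Suc k) - xs = (x k - xs) - (lam k / max mu (norm (d k))) *\<^sub>R d k"
      using iter by (simp add: d_def algebra_simps)
    have "(norm (x (Suc k) - xs))\<^sup>2 \<le> (norm (x k - xs))\<^sup>2 - 2 * (lam k / max mu (norm (d k))) * inner (d k) (x k - xs) + (lam k)\<^sup>2"
      unfolding eq by (rule norm_step) (use etapos A5(1) in auto)
    then show ?thesis by (simp only: e_def)
  qed
  have sk: "lam k * Ph k \<le> Eb / 2 * (e k - e (Suc k) + (lam k)\<^sup>2) + L * lam k" for k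
  proof -
    have "lam k * Ph k \<le> Eb / 2 * (e k - e (Suc k) + (lam k)\<^sup>2) + Eb * lam k * L0 / mu"
      by (rule step_real[OF _ mu_pos _ _ Ph0 L0nn keyk stepk])
         (use A5(1) spec[OF Mbar, of k] in \<open>auto simp: Eb_def d_def le_max_iff_disj\<close>)
    moreover have "Eb * lam k * L0 / mu = L * lam k" by (simp add: Eb_def L0_def L_def)
    ultimately show ?thesis by simp
  qed
  define K0 where "K0 = Eb / 2 * (e 0 + S)"
  have sumbound: "(\<Sum>k\<le>N. lam k * Ph k) \<le> K0 + L * Lam N" for N
  proof -
    have "(\<Sum>k\<le>N. lam k * Ph k) \<le> (\<Sum>k\<le>N. Eb / 2 * (e k - e (Suc k) + (lam k)\<^sup>2) + L * lam k)"
      by (rule sum_mono) (rule sk)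
    also have "\<dots> = Eb / 2 * ((\<Sum>k\<le>N. e k - e (Suc k)) + (\<Sum>k\<le>N. (lam k)\<^sup>2)) + L * Lam N"
      by (simp only: sum.distrib sum_distrib_left[symmetric] Lam_def)
    also have "(\<Sum>k\<le>N. e k - e (Suc k)) = e 0 - e (Suc N)" by (rule sum_telescope)
    also have "Eb / 2 * (e 0 - e (Suc N) + (\<Sum>k\<le>N. (lam k)\<^sup>2)) \<le> K0"
    proof -
      have "(\<Sum>k\<le>N. (lam k)\<^sup>2) \<le> S" unfolding S_def
        by (rule sum_le_suminf[OF A5(3)]) auto
      moreover have "e (Suc N) \<ge> 0" by (simp add: e_def)
      ultimately show ?thesis unfolding K0_def using Eb0 by (intro mult_left_mono) auto
    qed
    finally show ?thesis by simp
  qed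
  have Lampos: "Lam N > 0" for N unfolding Lam_def using A5(1) by (intro sum_pos) auto
  have LamT: "filterlim Lam at_top sequentially"
    unfolding Lam_def by (rule partial_sums_at_top[OF A5(1,2)])
  have lim0: "(\<lambda>N. c / Lam N) \<longlonglongrightarrow> 0" for c
    by (rule tendsto_divide_0[OF tendsto_const filterlim_at_top_imp_at_infinity[OF LamT]])
  have avg: "(\<Sum>k\<le>N. lam k * Ph k) / Lam N \<le> L + K0 / Lam N" for N
  proof -
    have "(\<Sum>k\<le>N. lam k * Ph k) / Lam N \<le> (K0 + L * Lam N) / Lam N"
      by (rule divide_right_mono[OF sumbound]) (use Lampos[of N] in simp)
    also have "\<dots> = L + K0 / Lam N" using Lampos[of N] by (simp add: field_simps)
    finally show ?thesis .
  qed
  have part1: "limsup (\<lambda>N. ereal ((\<Sum>k\<le>N. lam k * Ph k) / Lam N)) \<le> ereal L"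
  proof -
    have "limsup (\<lambda>N. ereal ((\<Sum>k\<le>N. lam k * Ph k) / Lam N)) \<le> limsup (\<lambda>N. ereal (L + K0 / Lam N))"
      by (rule Limsup_mono) (use avg in auto)
    also have "\<dots> = ereal L"
    proof (rule lim_imp_Limsup[OF trivial_limit_sequentially])
      have "(\<lambda>N. L + K0 / Lam N) \<longlonglongrightarrow> L + 0" by (intro tendsto_add tendsto_const lim0)
      then show "(\<lambda>N. ereal (L + K0 / Lam N)) \<longlonglongrightarrow> ereal L" by (intro tendsto_ereal) simp
    qed
    finally show ?thesis .
  qed
  have part2: "liminf (\<lambda>k. ereal (Ph k)) \<le> ereal L"
  proof (rule ccontr)
    assume "\<not> ?thesis"
    then have "ereal L < liminf (\<lambda>k. ereal (Ph k))" by simp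
    then obtain c where c1: "ereal L < ereal c" and c2: "ereal c < liminf (\<lambda>k. ereal (Ph k))"
      using ereal_dense2 by blast
    have "eventually (\<lambda>k. ereal c < ereal (Ph k)) sequentially" by (rule less_LiminfD[OF c2])
    then obtain K where K: "\<And>k. k \<ge> K \<Longrightarrow> c < Ph k" by (auto simp: eventually_sequentially)
    have cL: "L < c" using c1 by simp
    have c0: "c \<ge> 0" using cL Lnn by linarith
    define P where "P = (\<Sum>k<K. lam k * c)"
    have bnd: "c \<le> L + (K0 + P) / Lam N" for N
    proof -
      have pt: "lam k * c \<le> lam k * Ph k + (if k \<in> {..<K} then lam k * c else 0)" for k
      proof (cases "k < K")
        case True then show ?thesis using Ph0[of k] spec[OF A5(1), of k] by simp
      next
        case False then have "c < Ph k" using K by simp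
        then show ?thesis using False A5(1) by (simp add: less_imp_le)
      qed
      have "c * Lam N = (\<Sum>k\<le>N. lam k * c)" by (simp add: Lam_def sum_distrib_left mult.commute)
      also have "\<dots> \<le> (\<Sum>k\<le>N. lam k * Ph k + (if k \<in> {..<K} then lam k * c else 0))"
        by (rule sum_mono) (rule pt)
      also have "\<dots> = (\<Sum>k\<le>N. lam k * Ph k) + (\<Sum>k\<in>{..N} \<inter> {..<K}. lam k * c)"
        by (simp add: sum.distrib sum.inter_restrict)
      also have "(\<Sum>k\<in>{..N} \<inter> {..<K}. lam k * c) \<le> P"
        unfolding P_def by (rule sum_mono2) (use A5(1) c0 in \<open>auto intro: mult_nonneg_nonneg less_imp_le\<close>)
      finally have "c * Lam N \<le> K0 + L * Lam N + P" using sumbound[of N] by linarith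
      then have "c * Lam N / Lam N \<le> (K0 + L * Lam N + P) / Lam N"
        by (rule divide_right_mono) (use Lampos[of N] in simp)
      then show ?thesis using Lampos[of N] by (simp add: field_simps)
    qed
    have "(\<lambda>N. L + (K0 + P) / Lam N) \<longlonglongrightarrow> L + 0" by (intro tendsto_add tendsto_const lim0)
    then have "c \<le> L + 0" by (rule LIMSEQ_le_const) (use bnd in auto)
    then show False using cL by simp
  qed
  show ?thesis using part1 part2 by (simp add: Ph_def Lam_def L_def)
qed

end
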